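(* Let $a<b$, $0<\epsilon<\min\{1,b-a\}$ and $f\in C^1([a,b])$. Let $\sigma=\tanh$, $\beta=-3\ln(\epsilon)/\epsilon$, $$\rho_\epsilon(x)=\frac{\sigma(\beta(x+\epsilon^2))-\sigma(\beta(x-\epsilon^2))}{2\epsilon^2},\qquad \omega(t)=\sigma\bigl(\beta(t-\max\{a,t-\epsilon\})\bigr)-\sigma\bigl(\beta(t-\min\{b,t+\epsilon\})\bigr).$$ Then for all $t\in[a,b]$ one has $1-\epsilon\le\omega(t)\le2$ and $$\Bigl|\int_a^b f(s)\rho_\epsilon(t-s)\,ds-\omega(t)f(t)\Bigr|\le 20\|f\|_{C^1([a,b])}\,(b-a-\ln\epsilon)\,\epsilon.$$
   Context: $\|f\|_{C^1([a,b])}=\|f\|_{L^\infty([a,b])}+\|f'\|_{L^\infty([a,b])}$. *)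

theory Defs
  imports "HOL-Analysis.Analysis"
begin

definition C1_on :: "real \<Rightarrow> real \<Rightarrow> (real \<Rightarrow> real) \<Rightarrow> (real \<Rightarrow> real) \<Rightarrow> bool" where
  "C1_on a b f f' \<longleftrightarrow>
     (\<forall>x\<in>{a..b}. (f has_real_derivative f' x) (at x within {a..b})) \<and> continuous_on {a..b} f'"

definition C1_norm :: "real \<Rightarrow> real \<Rightarrow> (real \<Rightarrow> real) \<Rightarrow> (real \<Rightarrow> real) \<Rightarrow> real" where
  "C1_norm a b f f' = (SUP x\<in>{a..b}. \<bar>f x\<bar>) + (SUP x\<in>{a..b}. \<bar>f' x\<bar>)"

definition beta_eps :: "real \<Rightarrow> real" where
  "beta_eps \<epsilon> = - 3 * ln \<epsilon> / \<epsilon>"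

definition rho_eps :: "real \<Rightarrow> real \<Rightarrow> real" where
  "rho_eps \<epsilon> x = (tanh (beta_eps \<epsilon> * (x + \<epsilon>^2)) - tanh (beta_eps \<epsilon> * (x - \<epsilon>^2))) / (2 * \<epsilon>^2)"

definition omega_eps :: "real \<Rightarrow> real \<Rightarrow> real \<Rightarrow> real \<Rightarrow> real" where
  "omega_eps a b \<epsilon> t = tanh (beta_eps \<epsilon> * (t - max a (t - \<epsilon>))) - tanh (beta_eps \<epsilon> * (t - min b (t + \<epsilon>)))"

end

theory Submission
  imports Defs
begin

lemma tanh_deriv_real: "(tanh has_real_derivative 1 - tanh z ^ 2) (at z)" for z :: real
proof -
  have "((\<lambda>x. sinh x / cosh x) has_real_derivative 1 - tanh z ^ 2) (at z)"
    by (rule derivative_eq_intros refl | simp add: tanh_def field_simps power2_eq_square cosh_square_eq)+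
  moreover have "(\<lambda>x. sinh x / cosh x) = (tanh :: real \<Rightarrow> real)" by (auto simp: tanh_def)
  ultimately show ?thesis by simp
qed

lemma tanh_lip: "\<bar>tanh x - tanh y\<bar> \<le> \<bar>x - y\<bar>" for x y :: real
proof -
  have key: "tanh x - tanh y \<le> x - y" if "y < x" for x y :: real
  proof -
    have "\<And>z. y \<le> z \<Longrightarrow> z \<le> x \<Longrightarrow> DERIV tanh z :> 1 - tanh z ^ 2"
      by (auto intro: tanh_deriv_real)
    from MVT2[OF that this] obtain z where "tanh x - tanh y = (x - y) * (1 - tanh z ^ 2)"
      by blast
    moreover have "0 \<le> (x - y) * tanh z ^ 2" using that by simp
    ultimately show ?thesis by (simp add: algebra_simps)
  qed
  show ?thesis
  proof (cases "x = y")
    case False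
    then have "y < x \<or> x < y" by linarith
    then show ?thesis
      using key[of y x] key[of x y] tanh_real_less_iff[of x y] tanh_real_less_iff[of y x]
      by (auto simp: abs_if)
  qed simp
qed

lemma lc_deriv: "((\<lambda>x. ln (cosh x)) has_real_derivative tanh x) (at x)" for x :: real
  by (rule derivative_eq_intros refl | simp add: tanh_def field_simps)+

definition Hf :: "real \<Rightarrow> real \<Rightarrow> real \<Rightarrow> real" where
  "Hf \<beta> c u = (ln (cosh (\<beta>*(u+c))) - ln (cosh (\<beta>*(u-c)))) / (2*\<beta>*c)"

lemma H_deriv:
  assumes "\<beta> \<noteq> 0" "c \<noteq> 0"
  shows "(Hf \<beta> c has_real_derivative (tanh (\<beta>*(u+c)) - tanh (\<beta>*(u-c))) / (2*c)) (at u)"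
proof -
  have "((\<lambda>u. (ln (cosh (\<beta>*(u+c))) - ln (cosh (\<beta>*(u-c)))) / (2*\<beta>*c)) has_real_derivative
      (tanh (\<beta>*(u+c)) * \<beta> - tanh (\<beta>*(u-c)) * \<beta>) / (2*\<beta>*c)) (at u)"
  proof -
    have d1: "((\<lambda>u. \<beta>*(u+c)) has_real_derivative \<beta>) (at u)"
      by (auto intro!: derivative_eq_intros)
    have d2: "((\<lambda>u. \<beta>*(u-c)) has_real_derivative \<beta>) (at u)"
      by (auto intro!: derivative_eq_intros)
    have e1: "((\<lambda>u. ln (cosh (\<beta>*(u+c)))) has_real_derivative tanh (\<beta>*(u+c)) * \<beta>) (at u)"
      by (rule DERIV_chain2[OF lc_deriv d1])
    have e2: "((\<lambda>u. ln (cosh (\<beta>*(u-c)))) has_real_derivative tanh (\<beta>*(u-c)) * \<beta>) (at u)"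
      by (rule DERIV_chain2[OF lc_deriv d2])
    show ?thesis by (rule DERIV_cdivide[OF DERIV_diff[OF e1 e2]])
  qed
  moreover have "(tanh (\<beta>*(u+c)) * \<beta> - tanh (\<beta>*(u-c)) * \<beta>) / (2*\<beta>*c)
      = (tanh (\<beta>*(u+c)) - tanh (\<beta>*(u-c))) / (2*c)"
    using assms by (simp add: field_simps)
  ultimately show ?thesis unfolding Hf_def[abs_def] by simp
qed

lemma H_mvt:
  assumes "\<beta> > 0" "c > 0"
  shows "\<exists>\<eta>. \<beta>*(u-c) < \<eta> \<and> \<eta> < \<beta>*(u+c) \<and> Hf \<beta> c u = tanh \<eta>"
proof -
  have lt: "\<beta>*(u-c) < \<beta>*(u+c)" using assms by simp
  have "\<And>x. \<beta>*(u-c) \<le> x \<Longrightarrow> x \<le> \<beta>*(u+c) \<Longrightarrow> ((\<lambda>x. ln (cosh x)) has_real_derivative tanh x) (at x)"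
    by (rule lc_deriv)
  from MVT2[OF lt this] obtain z where z: "\<beta>*(u-c) < z" "z < \<beta>*(u+c)"
    "ln (cosh (\<beta>*(u+c))) - ln (cosh (\<beta>*(u-c))) = (\<beta>*(u+c) - \<beta>*(u-c)) * tanh z"
    by blast
  have "\<beta>*(u+c) - \<beta>*(u-c) = 2*\<beta>*c" by (simp add: algebra_simps)
  with z(3) have "Hf \<beta> c u = tanh z" using assms unfolding Hf_def by simp
  with z show ?thesis by blast
qed

lemma H_odd: "Hf \<beta> c (-u) = - Hf \<beta> c u"
proof -
  have "cosh (\<beta>*(-u+c)) = cosh (\<beta>*(u-c))" "cosh (\<beta>*(-u-c)) = cosh (\<beta>*(u+c))"
  proof -
    have "\<beta>*(-u+c) = -(\<beta>*(u-c))" "\<beta>*(-u-c) = -(\<beta>*(u+c))" by (simp_all add: algebra_simps)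
    then show "cosh (\<beta>*(-u+c)) = cosh (\<beta>*(u-c))" "cosh (\<beta>*(-u-c)) = cosh (\<beta>*(u+c))"
      by (simp_all only: cosh_minus)
  qed
  then have "Hf \<beta> c (-u) = (ln (cosh (\<beta>*(u-c))) - ln (cosh (\<beta>*(u+c)))) / (2*\<beta>*c)"
    unfolding Hf_def by (simp only:)
  then show ?thesis unfolding Hf_def by (simp add: diff_divide_distrib)
qed

lemma H_bound:
  assumes "\<beta> > 0" "c > 0"
  shows "\<bar>Hf \<beta> c u\<bar> < 1"
proof -
  obtain \<eta> where "Hf \<beta> c u = tanh \<eta>" using H_mvt[OF assms, of u] by blast
  then show ?thesis using tanh_real_bounds[of \<eta>] by auto
qed

lemma one_minus_tanh: "1 - tanh x = 2 * exp (-2*x) / (1 + exp (-2*x))" for x :: real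
proof -
  define e where "e = exp (-2*x)"
  have "1 + e > 0" unfolding e_def by (simp add: add_pos_pos)
  then have "1 - (1 - e) / (1 + e) = 2 * e / (1 + e)" by (simp add: field_simps)
  then show ?thesis unfolding tanh_real_altdef e_def by simp
qed

lemma lip_f:
  assumes d: "\<forall>x\<in>{a..b}. (f has_real_derivative f' x) (at x within {a..b})"
    and B: "\<forall>x\<in>{a..b}. \<bar>f' x\<bar> \<le> M" and s: "s \<in> {a..b}" and t: "t \<in> {a..b}"
  shows "\<bar>f s - f t\<bar> \<le> M * \<bar>s - t\<bar>"
proof -
  have "norm (f s - f t) \<le> M * norm (s - t)"
  proof (rule differentiable_bound[where f'="\<lambda>x. (*) (f' x)" and S="{a..b}"])
    show "convex {a..b::real}" by simp
    show "(f has_derivative (*) (f' x)) (at x within {a..b})" if "x \<in> {a..b}" for x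
      using d that by (simp add: has_field_derivative_def)
    show "onorm ((*) (f' x)) \<le> M" if "x \<in> {a..b}" for x
    proof (rule onorm_le)
      fix y :: real
      have "norm (f' x * y) = \<bar>f' x\<bar> * \<bar>y\<bar>" by (simp add: abs_mult)
      also have "\<dots> \<le> M * \<bar>y\<bar>" using B that by (simp add: mult_right_mono)
      finally show "norm (f' x * y) \<le> M * norm y" by simp
    qed
  qed (use s t in auto)
  then show ?thesis by simp
qed

lemma sup_bound:
  fixes g :: "real \<Rightarrow> real"
  assumes "continuous_on {a..b} g" "x \<in> {a..b::real}"
  shows "\<bar>g x\<bar> \<le> (SUP y\<in>{a..b}. \<bar>g y\<bar>)"
proof -
  have "compact ((\<lambda>y. \<bar>g y\<bar>) ` {a..b})"
    by (auto intro!: compact_continuous_image continuous_intros assms)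
  then have "bdd_above ((\<lambda>y. \<bar>g y\<bar>) ` {a..b})"
    by (simp add: bounded_imp_bdd_above compact_imp_bounded)
  then show ?thesis using assms(2) by (rule cSUP_upper[rotated])
qed

lemma exp_ln_pow:
  assumes "(0::real) < e"
  shows "exp (real n * ln e) = e ^ n"
  using assms by (simp add: ln_realpow[symmetric])

context
  fixes \<epsilon> :: real
  assumes e0: "0 < \<epsilon>" and e1: "\<epsilon> < 1"
begin

lemma L_pos: "ln \<epsilon> < 0" using e0 e1 by simp

lemma beta_pos: "beta_eps \<epsilon> > 0"
proof -
  have "- 3 * ln \<epsilon> > 0" using L_pos by simp
  then show ?thesis using e0 unfolding beta_eps_def by (rule divide_pos_pos)
qed

lemma beta_e: "beta_eps \<epsilon> * \<epsilon> = - 3 * ln \<epsilon>"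
  using e0 unfolding beta_eps_def by simp

lemma beta_c: "beta_eps \<epsilon> * \<epsilon>^2 = - 3 * ln \<epsilon> * \<epsilon>"
  using e0 unfolding beta_eps_def by (simp add: power2_eq_square)

lemma e6_eq: "1 - tanh (beta_eps \<epsilon> * \<epsilon>) = 2 * \<epsilon>^6 / (1 + \<epsilon>^6)"
proof -
  have "exp (-2 * (beta_eps \<epsilon> * \<epsilon>)) = exp (real 6 * ln \<epsilon>)"
    unfolding beta_e by simp
  also have "\<dots> = \<epsilon>^6" by (rule exp_ln_pow[OF e0])
  finally show ?thesis unfolding one_minus_tanh by simp
qed

lemma e6_le_e: "1 - tanh (beta_eps \<epsilon> * \<epsilon>) \<le> \<epsilon>"
proof -
  have p: "\<epsilon>^5 \<le> 1" using e0 e1 by (simp add: power_le_one)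
  have "0 \<le> (1 - \<epsilon>) * (1 + \<epsilon> + \<epsilon>^2 + \<epsilon>^3 + \<epsilon>^4 - \<epsilon>^5)"
  proof (intro mult_nonneg_nonneg)
    have "0 \<le> \<epsilon>^2" "0 \<le> \<epsilon>^3" "0 \<le> \<epsilon>^4" using e0 by simp_all
    then show "0 \<le> 1 + \<epsilon> + \<epsilon>^2 + \<epsilon>^3 + \<epsilon>^4 - \<epsilon>^5" using p e0 by linarith
  qed (use e1 in simp)
  then have h: "2 * \<epsilon>^5 \<le> 1 + \<epsilon>^6" by (simp add: algebra_simps eval_nat_numeral)
  have "2 * \<epsilon>^6 \<le> \<epsilon> * (1 + \<epsilon>^6)"
  proof -
    have "\<epsilon> * (2 * \<epsilon>^5) \<le> \<epsilon> * (1 + \<epsilon>^6)" using h e0 by (intro mult_left_mono) auto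
    moreover have "\<epsilon> * (2 * \<epsilon>^5) = 2 * \<epsilon>^6" by (simp add: eval_nat_numeral)
    ultimately show ?thesis by simp
  qed
  moreover have "0 < 1 + \<epsilon>^6" using e0 by (simp add: add_pos_nonneg)
  ultimately show ?thesis unfolding e6_eq by (simp add: pos_divide_le_eq)
qed

lemma e6_le_2e6: "1 - tanh (beta_eps \<epsilon> * \<epsilon>) \<le> 2 * \<epsilon>^6"
  unfolding e6_eq using e0 by (simp add: divide_le_eq add_pos_pos mult_le_cancel_left1)

lemma rho_def': "rho_eps \<epsilon> x = (tanh (beta_eps \<epsilon> * (x + \<epsilon>^2)) - tanh (beta_eps \<epsilon> * (x - \<epsilon>^2))) / (2 * \<epsilon>^2)"
  by (simp add: rho_eps_def)

lemma rho_nonneg: "rho_eps \<epsilon> x \<ge> 0"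
  unfolding rho_eps_def using beta_pos e0 by (simp add: divide_nonneg_pos)

lemma rho_even: "rho_eps \<epsilon> (-x) = rho_eps \<epsilon> x"
proof -
  have "beta_eps \<epsilon> * (-x + \<epsilon>^2) = - (beta_eps \<epsilon> * (x - \<epsilon>^2))"
       "beta_eps \<epsilon> * (-x - \<epsilon>^2) = - (beta_eps \<epsilon> * (x + \<epsilon>^2))"
    by (simp_all add: algebra_simps)
  then show ?thesis unfolding rho_eps_def by (simp only: tanh_minus) simp
qed

lemma rho_small_pos:
  assumes "\<epsilon> \<le> 1/2" "\<epsilon> \<le> u"
  shows "rho_eps \<epsilon> u \<le> \<epsilon>"
proof -
  define x where "x = beta_eps \<epsilon> * (u - \<epsilon>^2)"
  have "\<epsilon>^2 \<le> \<epsilon> / 2" using assms e0 by (simp add: power2_eq_square)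
  then have "u - \<epsilon>^2 \<ge> \<epsilon> / 2" using assms by simp
  then have "x \<ge> beta_eps \<epsilon> * (\<epsilon> / 2)" unfolding x_def using beta_pos
    by (simp add: mult_left_mono)
  then have x: "-2 * x \<le> 3 * ln \<epsilon>" using beta_e by simp
  have "exp (-2 * x) \<le> exp (real 3 * ln \<epsilon>)" using x by simp
  also have "\<dots> = \<epsilon>^3" by (rule exp_ln_pow[OF e0])
  finally have ex: "exp (-2*x) \<le> \<epsilon>^3" .
  have "1 - tanh x = 2 * exp (-2*x) / (1 + exp (-2*x))" by (rule one_minus_tanh)
  also have "\<dots> \<le> 2 * exp (-2*x)" by (simp add: divide_le_eq add_pos_pos mult_le_cancel_left1)
  also have "\<dots> \<le> 2 * \<epsilon>^3" using ex by simp
  finally have a: "1 - tanh x \<le> 2 * \<epsilon>^3" .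
  have "tanh (beta_eps \<epsilon> * (u + \<epsilon>^2)) - tanh x \<le> 1 - tanh x"
    using tanh_real_lt_1 less_imp_le by auto
  also have "\<dots> \<le> 2 * \<epsilon>^3" by (rule a)
  also have "\<dots> = \<epsilon> * (2 * \<epsilon>^2)" by (simp add: power2_eq_square eval_nat_numeral)
  finally have fin: "tanh (beta_eps \<epsilon> * (u + \<epsilon>^2)) - tanh x \<le> \<epsilon> * (2 * \<epsilon>^2)" .
  have "rho_eps \<epsilon> u = (tanh (beta_eps \<epsilon> * (u + \<epsilon>^2)) - tanh x) / (2 * \<epsilon>^2)"
    unfolding rho_eps_def x_def by simp
  also have "\<dots> \<le> \<epsilon>" using fin e0 by (subst pos_divide_le_eq) auto
  finally show ?thesis .
qed

lemma rho_small:
  assumes "\<epsilon> \<le> 1/2" "\<epsilon> \<le> \<bar>u\<bar>"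
  shows "rho_eps \<epsilon> u \<le> \<epsilon>"
proof (cases "u \<ge> 0")
  case True then show ?thesis using rho_small_pos assms by simp
next
  case False
  then have "rho_eps \<epsilon> u = rho_eps \<epsilon> (-u)" using rho_even[of "-u"] by simp
  then show ?thesis using rho_small_pos[of "-u"] assms False by simp
qed

lemma H_approx:
  "\<bar>Hf (beta_eps \<epsilon>) (\<epsilon>^2) v - tanh (beta_eps \<epsilon> * min v \<epsilon>)\<bar>
     \<le> beta_eps \<epsilon> * \<epsilon>^2 + (1 - tanh (beta_eps \<epsilon> * \<epsilon>))"
proof -
  define \<beta> where "\<beta> = beta_eps \<epsilon>"
  have bp: "\<beta> > 0" using beta_pos \<beta>_def by simp
  have cp: "\<epsilon>^2 > 0" using e0 by simp
  obtain z where z: "\<beta>*(v-\<epsilon>^2) < z" "z < \<beta>*(v+\<epsilon>^2)" "Hf \<beta> (\<epsilon>^2) v = tanh z"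
    using H_mvt[OF bp cp, of v] by blast
  have d: "abs (z - \<beta> * v) \<le> \<beta> * \<epsilon>^2" using z(1,2) by (simp add: algebra_simps abs_le_iff)
  have e6: "0 \<le> 1 - tanh (\<beta> * \<epsilon>)" using tanh_real_lt_1[of "\<beta>*\<epsilon>"] by simp
  have "\<bar>tanh z - tanh (\<beta> * min v \<epsilon>)\<bar> \<le> \<beta> * \<epsilon>^2 + (1 - tanh (\<beta> * \<epsilon>))"
  proof (cases "v \<le> \<epsilon>")
    case True
    then have "\<bar>tanh z - tanh (\<beta> * min v \<epsilon>)\<bar> \<le> abs (z - \<beta> * v)" using tanh_lip by simp
    then show ?thesis using d e6 by linarith
  next
    case False
    then have m: "min v \<epsilon> = \<epsilon>" by simp
    show ?thesis
    proof (cases "z \<ge> \<beta> * \<epsilon>")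
      case True
      then have "tanh (\<beta>*\<epsilon>) \<le> tanh z" by simp
      moreover have "tanh z < 1" by (rule tanh_real_lt_1)
      moreover have "0 \<le> \<beta> * \<epsilon>^2" using bp by simp
      ultimately show ?thesis unfolding m by (simp add: abs_if)
    next
      case F2: False
      have "\<beta> * \<epsilon> \<le> \<beta> * v" using False bp by simp
      then have "abs (z - \<beta> * \<epsilon>) \<le> \<beta> * \<epsilon>^2" using d F2 by (simp add: abs_if)
      then have "\<bar>tanh z - tanh (\<beta> * \<epsilon>)\<bar> \<le> \<beta> * \<epsilon>^2" using tanh_lip[of z "\<beta>*\<epsilon>"] by linarith
      then show ?thesis unfolding m using e6 by linarith
    qed
  qed
  then show ?thesis using z(3) \<beta>_def by simp
qed

end

theorem lemmaA4:
  fixes a b \<epsilon> :: real and f f' :: "real \<Rightarrow> real"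
  assumes "a < b" and "0 < \<epsilon>" and "\<epsilon> < min 1 (b - a)"
    and "C1_on a b f f'"
  shows "\<forall>t\<in>{a..b}. 1 - \<epsilon> \<le> omega_eps a b \<epsilon> t \<and> omega_eps a b \<epsilon> t \<le> 2 \<and>
           \<bar>integral {a..b} (\<lambda>s. f s * rho_eps \<epsilon> (t - s)) - omega_eps a b \<epsilon> t * f t\<bar>
             \<le> 20 * C1_norm a b f f' * (b - a - ln \<epsilon>) * \<epsilon>"
proof (intro ballI)
  fix t assume t: "t \<in> {a..b}"
  have ab: "a < b" and e0: "0 < \<epsilon>" and e1: "\<epsilon> < 1" and eba: "\<epsilon> < b - a" using assms by auto
  define \<beta> where "\<beta> = beta_eps \<epsilon>"
  have bp: "\<beta> > 0" unfolding \<beta>_def using beta_pos[OF e0 e1] .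
  define H where "H = Hf \<beta> (\<epsilon>^2)"
  define m1 where "m1 = min (t - a) \<epsilon>"
  define m2 where "m2 = min (b - t) \<epsilon>"
  have m1p: "0 \<le> m1" and m2p: "0 \<le> m2" using t e0 by (auto simp: m1_def m2_def)
  have m12: "\<epsilon> \<le> m1 + m2" using t eba e0 by (auto simp: m1_def m2_def min_def)
  have q1: "t - max a (t - \<epsilon>) = m1" by (auto simp: m1_def max_def min_def)
  have q2: "t - min b (t + \<epsilon>) = - m2" by (auto simp: m2_def max_def min_def)
  have om: "omega_eps a b \<epsilon> t = tanh (\<beta> * m1) + tanh (\<beta> * m2)"
    unfolding omega_eps_def q1 q2 \<beta>_def by simp
  have "tanh (\<beta> * (m1 + m2)) \<le> tanh (\<beta> * m1) + tanh (\<beta> * m2)"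
  proof -
    have x0: "0 \<le> tanh (\<beta> * m1)" "0 \<le> tanh (\<beta> * m2)" using bp m1p m2p by simp_all
    have "tanh (\<beta> * (m1 + m2)) = (tanh (\<beta> * m1) + tanh (\<beta> * m2)) / (1 + tanh (\<beta> * m1) * tanh (\<beta> * m2))"
      unfolding distrib_left by (rule tanh_add) simp_all
    also have "\<dots> \<le> tanh (\<beta> * m1) + tanh (\<beta> * m2)"
    proof -
      have p: "0 \<le> tanh (\<beta> * m1) * tanh (\<beta> * m2)" using x0 by simp
      have "tanh (\<beta> * m1) + tanh (\<beta> * m2) \<le> (tanh (\<beta> * m1) + tanh (\<beta> * m2)) * (1 + tanh (\<beta> * m1) * tanh (\<beta> * m2))"
        using x0 p by (simp add: algebra_simps)
      then show ?thesis using p by (subst pos_divide_le_eq) auto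
    qed
    finally show ?thesis .
  qed
  moreover have "tanh (\<beta> * \<epsilon>) \<le> tanh (\<beta> * (m1 + m2))" using m12 bp by simp
  moreover have "1 - \<epsilon> \<le> tanh (\<beta> * \<epsilon>)" using e6_le_e[OF e0 e1] \<beta>_def by simp
  ultimately have low: "1 - \<epsilon> \<le> omega_eps a b \<epsilon> t" unfolding om by linarith
  have up: "omega_eps a b \<epsilon> t \<le> 2" unfolding om
    using tanh_real_lt_1[of "\<beta> * m1"] tanh_real_lt_1[of "\<beta> * m2"] by linarith
  have fd: "\<forall>x\<in>{a..b}. (f has_real_derivative f' x) (at x within {a..b})"
    and cf': "continuous_on {a..b} f'" using assms(4) unfolding C1_on_def by auto
  have cf: "continuous_on {a..b} f" using fd by (intro DERIV_continuous_on) auto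
  define M0 where "M0 = (SUP x\<in>{a..b}. \<bar>f x\<bar>)"
  define M1 where "M1 = (SUP x\<in>{a..b}. \<bar>f' x\<bar>)"
  have M0b: "\<forall>x\<in>{a..b}. \<bar>f x\<bar> \<le> M0" unfolding M0_def using sup_bound[OF cf] by auto
  have M1b: "\<forall>x\<in>{a..b}. \<bar>f' x\<bar> \<le> M1" unfolding M1_def using sup_bound[OF cf'] by auto
  have M0p: "0 \<le> M0" using M0b ab by (meson abs_ge_zero atLeastAtMost_iff less_imp_le order_refl order_trans)
  have M1p: "0 \<le> M1" using M1b ab by (meson abs_ge_zero atLeastAtMost_iff less_imp_le order_refl order_trans)
  have norm_eq: "C1_norm a b f f' = M0 + M1" unfolding C1_norm_def M0_def M1_def ..
  have lip: "\<bar>f s - f t\<bar> \<le> M1 * \<bar>s - t\<bar>" if "s \<in> {a..b}" for s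
    using lip_f[OF fd M1b that t] .
  have f2: "\<bar>f s - f t\<bar> \<le> 2 * M0" if "s \<in> {a..b}" for s
    using M0b[rule_format, OF that] M0b[rule_format, OF t] abs_triangle_ineq4[of "f s" "f t"] by linarith
  define g where "g = (\<lambda>s. rho_eps \<epsilon> (t - s))"
  have gnn: "0 \<le> g s" for s unfolding g_def using rho_nonneg[OF e0 e1] .
  have cg: "continuous_on {a..b} g" unfolding g_def rho_eps_def using e0 by (intro continuous_intros) auto
  have Hd: "(H has_real_derivative rho_eps \<epsilon> u) (at u)" for u
    unfolding H_def rho_def'[OF e0 e1] \<beta>_def[symmetric] using H_deriv[of \<beta> "\<epsilon>^2" u] bp e0 by simp
  have hasint: "(g has_integral (H (t - a) - H (t - b))) {a..b}"
  proof -
    have "((\<lambda>s. - H (t - s)) has_vector_derivative g s) (at s within {a..b})" for s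
    proof -
      have d1: "((\<lambda>s. t - s) has_real_derivative -1) (at s)" by (auto intro!: derivative_eq_intros)
      have "((\<lambda>s. H (t - s)) has_real_derivative rho_eps \<epsilon> (t - s) * -1) (at s)"
        by (rule DERIV_chain2[OF Hd d1])
      then have "((\<lambda>s. - H (t - s)) has_real_derivative g s) (at s)"
        unfolding g_def using DERIV_minus by fastforce
      then show ?thesis
        by (simp add: has_real_derivative_iff_has_vector_derivative has_vector_derivative_at_within)
    qed
    from fundamental_theorem_of_calculus[OF less_imp_le[OF ab] this]
    show ?thesis by simp
  qed
  define P where "P = H (t - a) - H (t - b)"
  have intg: "integral {a..b} g = P" using hasint P_def by (simp add: integral_unique)
  have gint: "g integrable_on {a..b}" using hasint by blast
  have P_eq: "P = H (t - a) + H (b - t)"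
    unfolding P_def H_def using H_odd[of \<beta> "\<epsilon>^2" "b - t"] by simp
  have Hb: "\<bar>H v\<bar> < 1" for v unfolding H_def using H_bound[OF bp, of "\<epsilon>^2" v] e0 by simp
  have P2: "P \<le> 2" using Hb[of "t - a"] Hb[of "b - t"] P_eq by linarith
  have fgint: "(\<lambda>s. f s * g s) integrable_on {a..b}"
    by (intro integrable_continuous_interval continuous_on_mult cf cg)
  have dint: "(\<lambda>s. (f s - f t) * g s) integrable_on {a..b}"
    by (intro integrable_continuous_interval continuous_intros cf cg)
  have "integral {a..b} (\<lambda>s. (f s - f t) * g s) = integral {a..b} (\<lambda>s. f s * g s - f t * g s)"
    by (simp add: algebra_simps)
  also have "\<dots> = integral {a..b} (\<lambda>s. f s * g s) - integral {a..b} (\<lambda>s. f t * g s)"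
    by (rule integral_diff[OF fgint]) (intro integrable_continuous_interval continuous_intros cg)
  also have "\<dots> = integral {a..b} (\<lambda>s. f s * g s) - f t * P" using intg by simp
  finally have decomp: "integral {a..b} (\<lambda>s. f s * g s) - omega_eps a b \<epsilon> t * f t
      = integral {a..b} (\<lambda>s. (f s - f t) * g s) + f t * (P - omega_eps a b \<epsilon> t)"
    by (simp add: algebra_simps)
  define e6 where "e6 = 1 - tanh (\<beta> * \<epsilon>)"
  have ha: "\<bar>H (t - a) - tanh (\<beta> * m1)\<bar> \<le> \<beta> * \<epsilon>^2 + e6"
    using H_approx[OF e0 e1, of "t - a"] unfolding H_def \<beta>_def m1_def e6_def by simp
  have hb: "\<bar>H (b - t) - tanh (\<beta> * m2)\<bar> \<le> \<beta> * \<epsilon>^2 + e6"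
    using H_approx[OF e0 e1, of "b - t"] unfolding H_def \<beta>_def m2_def e6_def by simp
  have "\<bar>P - omega_eps a b \<epsilon> t\<bar> \<le> 2 * (\<beta> * \<epsilon>^2 + e6)"
  proof -
    have eqP: "P - omega_eps a b \<epsilon> t = (H (t - a) - tanh (\<beta> * m1)) + (H (b - t) - tanh (\<beta> * m2))"
      unfolding P_eq om by simp
    then show ?thesis unfolding eqP
      using add_mono[OF ha hb] by (intro order_trans[OF abs_triangle_ineq]) simp
  qed
  moreover have "\<bar>f t\<bar> \<le> M0" using M0b t by simp
  ultimately have termA: "\<bar>f t * (P - omega_eps a b \<epsilon> t)\<bar> \<le> M0 * (2 * (\<beta> * \<epsilon>^2 + e6))"
    unfolding abs_mult by (intro mult_mono) auto
  define L where "L = - ln \<epsilon>"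
  have Lp: "0 \<le> L" using L_pos[OF e0 e1] L_def by simp
  have bc: "\<beta> * \<epsilon>^2 = 3 * L * \<epsilon>" using beta_c[OF e0 e1] \<beta>_def L_def by simp
  define K where "K = b - a + L"
  have K1: "1 \<le> K" using ln_le_minus_one[OF e0] eba unfolding K_def L_def by linarith
  have LK: "L \<le> K" using ab unfolding K_def by simp
  have rhs: "20 * C1_norm a b f f' * (b - a - ln \<epsilon>) * \<epsilon> = 20 * (M0 * \<epsilon> * K) + 20 * (M1 * \<epsilon> * K)"
    unfolding norm_eq K_def L_def by (simp add: algebra_simps)
  have M0K: "0 \<le> M0 * \<epsilon> * K" using M0p e0 K1 by simp
  have M1K: "M1 * \<epsilon> \<le> M1 * \<epsilon> * K" using mult_left_mono[OF K1, of "M1 * \<epsilon>"] M1p e0 by simp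
  have M0K2: "M0 * \<epsilon> \<le> M0 * \<epsilon> * K" using mult_left_mono[OF K1, of "M0 * \<epsilon>"] M0p e0 by simp
  have M0L: "M0 * L * \<epsilon> \<le> M0 * \<epsilon> * K" using M0p e0 LK
    by (metis mult.commute mult.left_commute mult_left_mono mult_nonneg_nonneg less_imp_le)
  show "1 - \<epsilon> \<le> omega_eps a b \<epsilon> t \<and> omega_eps a b \<epsilon> t \<le> 2 \<and>
           \<bar>integral {a..b} (\<lambda>s. f s * rho_eps \<epsilon> (t - s)) - omega_eps a b \<epsilon> t * f t\<bar>
             \<le> 20 * C1_norm a b f f' * (b - a - ln \<epsilon>) * \<epsilon>"
  proof (intro conjI low up)
    have main: "\<bar>integral {a..b} (\<lambda>s. f s * g s) - omega_eps a b \<epsilon> t * f t\<bar>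
        \<le> \<bar>integral {a..b} (\<lambda>s. (f s - f t) * g s)\<bar> + M0 * (2 * (\<beta> * \<epsilon>^2 + e6))"
      unfolding decomp using termA abs_triangle_ineq[of "integral {a..b} (\<lambda>s. (f s - f t) * g s)" "f t * (P - omega_eps a b \<epsilon> t)"] by linarith
    have A0: "M0 * (2 * (\<beta> * \<epsilon>^2 + e6)) = 6 * (M0 * L * \<epsilon>) + 2 * (M0 * e6)"
      unfolding bc by (simp add: algebra_simps)
    have M1K0: "0 \<le> M1 * \<epsilon> * K" using M1p e0 K1 by simp
    have "\<bar>integral {a..b} (\<lambda>s. f s * g s) - omega_eps a b \<epsilon> t * f t\<bar>
        \<le> 20 * (M0 * \<epsilon> * K) + 20 * (M1 * \<epsilon> * K)"
    proof (cases "\<epsilon> \<le> 1/2")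
      case True
      have pw: "norm ((f s - f t) * g s) \<le> M1 * \<epsilon> * g s + 2 * M0 * \<epsilon>" if s: "s \<in> {a..b}" for s
      proof (cases "\<bar>t - s\<bar> \<le> \<epsilon>")
        case True
        have "\<bar>f s - f t\<bar> \<le> M1 * \<epsilon>"
          using lip[OF s] True M1p by (metis abs_minus_commute mult_left_mono order_trans)
        then have "\<bar>f s - f t\<bar> * g s \<le> M1 * \<epsilon> * g s" using gnn by (simp add: mult_right_mono)
        moreover have "0 \<le> 2 * M0 * \<epsilon>" using M0p e0 by simp
        ultimately show ?thesis using gnn[of s] by (simp add: abs_mult)
      next
        case False
        have gs: "g s \<le> \<epsilon>" unfolding g_def using rho_small[OF e0 e1 \<open>\<epsilon> \<le> 1/2\<close>] False by simp
        have "\<bar>f s - f t\<bar> \<le> 2 * M0" using f2[OF s] .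
        then have "\<bar>f s - f t\<bar> * g s \<le> 2 * M0 * \<epsilon>" using gs gnn[of s] M0p
          by (intro mult_mono) auto
        moreover have "0 \<le> M1 * \<epsilon> * g s" using M1p e0 gnn[of s] by simp
        ultimately show ?thesis using gnn[of s] by (simp add: abs_mult)
      qed
      have bint: "(\<lambda>s. M1 * \<epsilon> * g s + 2 * M0 * \<epsilon>) integrable_on {a..b}"
        by (intro integrable_continuous_interval continuous_intros cg)
      have "norm (integral {a..b} (\<lambda>s. (f s - f t) * g s)) \<le> integral {a..b} (\<lambda>s. M1 * \<epsilon> * g s + 2 * M0 * \<epsilon>)"
        by (rule integral_norm_bound_integral[OF dint bint pw])
      also have "\<dots> = M1 * \<epsilon> * P + 2 * M0 * \<epsilon> * (b - a)"
      proof -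
        have i1: "(\<lambda>s. M1 * \<epsilon> * g s) integrable_on {a..b}"
          by (intro integrable_continuous_interval continuous_intros cg)
        have i2: "(\<lambda>s. 2 * M0 * \<epsilon>) integrable_on {a..b}"
          by (intro integrable_continuous_interval continuous_intros)
        have "integral {a..b} (\<lambda>s. M1 * \<epsilon> * g s + 2 * M0 * \<epsilon>)
            = integral {a..b} (\<lambda>s. M1 * \<epsilon> * g s) + integral {a..b} (\<lambda>s. 2 * M0 * \<epsilon>)"
          by (rule integral_add[OF i1 i2])
        also have "\<dots> = M1 * \<epsilon> * P + (b - a) * (2 * M0 * \<epsilon>)"
          using intg ab by (simp add: content_real)
        finally show ?thesis by simp
      qed
      finally have J: "\<bar>integral {a..b} (\<lambda>s. (f s - f t) * g s)\<bar> \<le> M1 * \<epsilon> * P + 2 * (M0 * (\<epsilon> * (b - a)))"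
        by (simp add: mult.assoc)
      have "M1 * \<epsilon> * P \<le> 2 * (M1 * \<epsilon>)" using mult_left_mono[OF P2, of "M1 * \<epsilon>"] M1p e0 by (simp add: mult.commute)
      moreover have e6b: "e6 \<le> 2 * \<epsilon> * (b - a)"
      proof -
        have "e6 \<le> 2 * \<epsilon>^6" unfolding e6_def \<beta>_def by (rule e6_le_2e6[OF e0 e1])
        also have "\<epsilon>^6 \<le> \<epsilon>^2" using e0 e1 by (intro power_decreasing) auto
        then have "2 * \<epsilon>^6 \<le> 2 * (\<epsilon> * \<epsilon>)" by (simp add: power2_eq_square)
        also have "\<epsilon> * \<epsilon> \<le> \<epsilon> * (b - a)" using eba e0 by simp
        finally show ?thesis by simp
      qed
      moreover have "M0 * e6 \<le> 2 * (M0 * (\<epsilon> * (b - a)))" using mult_left_mono[OF e6b M0p] by (simp add: mult.assoc mult.left_commute)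
      moreover have "M0 * (\<epsilon> * (b - a)) + M0 * L * \<epsilon> = M0 * \<epsilon> * K"
        unfolding K_def by (simp add: algebra_simps)
      moreover have "0 \<le> M0 * (\<epsilon> * (b - a))" using M0p e0 eba by simp
      ultimately show ?thesis using main A0 J M0K M1K M0L M1K0
        by linarith
    next
      case False
      have pw: "norm ((f s - f t) * g s) \<le> 2 * M0 * g s" if s: "s \<in> {a..b}" for s
      proof -
        have "\<bar>f s - f t\<bar> \<le> 2 * M0" using f2[OF s] .
        then show ?thesis using gnn[of s] by (simp add: abs_mult mult_right_mono)
      qed
      have bint: "(\<lambda>s. 2 * M0 * g s) integrable_on {a..b}"
        by (intro integrable_continuous_interval continuous_intros cg)
      have "norm (integral {a..b} (\<lambda>s. (f s - f t) * g s)) \<le> integral {a..b} (\<lambda>s. 2 * M0 * g s)"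
        by (rule integral_norm_bound_integral[OF dint bint pw])
      also have "\<dots> = 2 * M0 * P" using intg by simp
      also have "\<dots> \<le> 2 * M0 * 2" using mult_left_mono[OF P2 M0p] by (simp add: mult.commute)
      finally have J: "\<bar>integral {a..b} (\<lambda>s. (f s - f t) * g s)\<bar> \<le> 4 * M0" by simp
      have "e6 \<le> \<epsilon>" unfolding e6_def \<beta>_def by (rule e6_le_e[OF e0 e1])
      then have "M0 * e6 \<le> M0 * \<epsilon>" using M0p by (simp add: mult_left_mono)
      moreover have "M0 \<le> 2 * (M0 * \<epsilon>)"
      proof -
        have "M0 * 1 \<le> M0 * (2 * \<epsilon>)" using False M0p by (intro mult_left_mono) auto
        then show ?thesis by (simp add: mult.left_commute)
      qed
      ultimately show ?thesis using main A0 J M0K M1K M0L M0K2 M1K0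
        by linarith
    qed
    then show "\<bar>integral {a..b} (\<lambda>s. f s * rho_eps \<epsilon> (t - s)) - omega_eps a b \<epsilon> t * f t\<bar>
             \<le> 20 * C1_norm a b f f' * (b - a - ln \<epsilon>) * \<epsilon>"
      unfolding rhs g_def .
  qed
qed

end
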